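(* Let $\alpha>0$, $\beta\in\mathbb{R}$ with $0\le|\beta|<\alpha$, $\mu\in\mathbb{R}$, $\delta>0$, and set $\gamma=\sqrt{\alpha^2-\beta^2}$. Let $F(x;\alpha,\beta,\mu,\delta)$ denote the cumulative distribution function of the normal inverse Gaussian distribution with these parameters. Then for every $x\in\mathbb{R}$ with $x-\mu>0$, \[ F(x;\alpha,\beta,\mu,\delta)=1-\frac{\delta e^{\delta\gamma}}{\pi}\int_0^{\infty}E_1\!\left((x-\mu)\left(\sqrt{t^2+\alpha^2}-\beta\right)\right)\cos(\delta t)\,dt , \] where $E_1(z)=\int_z^\infty \frac{e^{-s}}{s}\,ds$ is the exponential integral.
   Context: The normal inverse Gaussian (NIG) distribution with parameters $\alpha>0$, $0\le|\beta|<\alpha$, $\mu\in\mathbb{R}$, $\delta>0$ has density $f(x;\alpha,\beta,\mu,\delta)=\frac{\alpha\delta}{\pi}\frac{K_1\left(\alpha\sqrt{\delta^2+(x-\mu)^2}\right)}{\sqrt{\delta^2+(x-\mu)^2}}e^{\delta\gamma+\beta(x-\mu)}$, $x\in\mathbb{R}$, where $\gamma=\sqrt{\alpha^2-\beta^2}$, and its cumulative distribution function is $F(x;\alpha,\beta,\mu,\delta)=\int_{-\infty}^x f(t;\alpha,\beta,\mu,\delta)\,dt$. Here $K_1$ denotes the modified Bessel function of the second kind of order $1$. *)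

theory Defs
  imports "HOL-Analysis.Analysis"
begin

text \<open>Modified Bessel function of the second kind of order 1, for real argument z > 0,
  via the standard integral representation K_1(z) = int_0^infty exp(-z cosh t) cosh t dt.\<close>
definition BesselK1 :: "real \<Rightarrow> real" where
  "BesselK1 z = (LBINT t:{0..}. exp (- z * cosh t) * cosh t)"

definition expint_E1 :: "real \<Rightarrow> real" where
  "expint_E1 z = (LBINT s:{z..}. exp (- s) / s)"

definition nig_pdf :: "real \<Rightarrow> real \<Rightarrow> real \<Rightarrow> real \<Rightarrow> real \<Rightarrow> real" where
  "nig_pdf \<alpha> \<beta> \<mu> \<delta> x =
     (let q = sqrt (\<delta>\<^sup>2 + (x - \<mu>)\<^sup>2); \<gamma> = sqrt (\<alpha>\<^sup>2 - \<beta>\<^sup>2) in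
      \<alpha> * \<delta> / pi * (BesselK1 (\<alpha> * q) / q) * exp (\<delta> * \<gamma> + \<beta> * (x - \<mu>)))"

definition nig_cdf :: "real \<Rightarrow> real \<Rightarrow> real \<Rightarrow> real \<Rightarrow> real \<Rightarrow> real" where
  "nig_cdf \<alpha> \<beta> \<mu> \<delta> x = (LBINT t:{..x}. nig_pdf \<alpha> \<beta> \<mu> \<delta> t)"

end

theory Submission
  imports Defs "HOL-Probability.Probability"
begin

lemma gauss_shift:
  fixes b c :: real assumes c: "c > 0"
  shows "has_bochner_integral lborel (\<lambda>y. exp (b * y - c * y\<^sup>2)) (sqrt (pi / c) * exp (b\<^sup>2 / (4 * c)))"
proof -
  define \<sigma> where "\<sigma> = sqrt (1 / (2 * c))"
  have s: "\<sigma> > 0" "\<sigma>\<^sup>2 = 1 / (2*c)" using c by (auto simp: \<sigma>_def)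
  have eq: "exp (b * y - c * y\<^sup>2) = (sqrt (pi / c) * exp (b\<^sup>2 / (4 * c))) * normal_density (b / (2*c)) \<sigma> y" for y
  proof -
    have "sqrt (2 * pi * \<sigma>\<^sup>2) = sqrt (pi / c)" using s c by (simp add: field_simps)
    moreover have "b * y - c * y\<^sup>2 = b\<^sup>2 / (4 * c) + (-(y - b/(2*c))\<^sup>2 / (2 * \<sigma>\<^sup>2))"
    proof -
      have "2 * \<sigma>\<^sup>2 = 1 / c" using s by simp
      then have "(-(y - b/(2*c))\<^sup>2 / (2 * \<sigma>\<^sup>2)) = - c * (y - b/(2*c))\<^sup>2" by simp
      moreover have "b * y - c * y\<^sup>2 = b\<^sup>2 / (4 * c) + (- c * (y - b/(2*c))\<^sup>2)"
        using c by (simp add: field_simps power2_eq_square)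
      ultimately show ?thesis by simp
    qed
    moreover have "exp (b\<^sup>2 / (4 * c) + (-(y - b/(2*c))\<^sup>2 / (2 * \<sigma>\<^sup>2))) = exp (b\<^sup>2 / (4 * c)) * exp (-(y - b/(2*c))\<^sup>2 / (2 * \<sigma>\<^sup>2))"
      by (rule exp_add)
    ultimately show ?thesis using c
      by (simp add: normal_density_def)
  qed
  have "has_bochner_integral lborel (\<lambda>y. (sqrt (pi / c) * exp (b\<^sup>2 / (4 * c))) * normal_density (b / (2*c)) \<sigma> y) ((sqrt (pi / c) * exp (b\<^sup>2 / (4 * c))) * 1)"
    using s(1) by (intro has_bochner_integral_mult_right) (simp add: has_bochner_integral_iff)
  then show ?thesis by (simp add: eq)
qed

lemma hbi_affine:
  fixes f :: "real \<Rightarrow> real"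
  assumes "has_bochner_integral lborel f I" "c \<noteq> 0"
  shows "has_bochner_integral lborel (\<lambda>x. f (t + c * x)) (I / \<bar>c\<bar>)"
proof -
  have i: "integrable lborel f" "integral\<^sup>L lborel f = I" using assms(1) by (auto simp: has_bochner_integral_iff)
  have "integrable lborel (\<lambda>x. f (t + c * x))" using lborel_integrable_real_affine[OF i(1) assms(2)] .
  moreover have "integral\<^sup>L lborel f = \<bar>c\<bar> * (\<integral>x. f (t + c * x) \<partial>lborel)"
    using lborel_integral_real_affine[OF assms(2), of f t] by simp
  ultimately show ?thesis using i assms(2) by (simp add: has_bochner_integral_iff)
qed

lemma std_normal_cos:
  "has_bochner_integral lborel (\<lambda>x. std_normal_density x * cos (t * x)) (exp (- t\<^sup>2 / 2))"
proof -
  interpret real_distribution std_normal_distribution by (rule real_dist_normal_dist)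
  have int: "integrable std_normal_distribution (\<lambda>x. iexp (t * x))"
    by (rule integrable_iexp) auto
  have int2: "integrable lborel (\<lambda>x. std_normal_density x *\<^sub>R iexp (t * x))"
    using int by (subst (asm) integrable_density) auto
  have "char std_normal_distribution t = (CLINT x|lborel. std_normal_density x *\<^sub>R iexp (t * x))"
    unfolding char_def by (subst integral_density) auto
  hence "complex_of_real (exp (- t\<^sup>2 / 2)) = (CLINT x|lborel. std_normal_density x *\<^sub>R iexp (t * x))"
    by (simp add: char_std_normal_distribution)
  hence "exp (- t\<^sup>2 / 2) = Re (CLINT x|lborel. std_normal_density x *\<^sub>R iexp (t * x))"
    by (metis Re_complex_of_real)
  also have "\<dots> = (LINT x|lborel. Re (std_normal_density x *\<^sub>R iexp (t * x)))"
    using integral_Re[OF int2] by (rule sym)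
  also have "\<dots> = (LINT x|lborel. std_normal_density x * cos (t * x))"
    by (simp add: Re_exp)
  finally have v: "(LINT x|lborel. std_normal_density x * cos (t * x)) = exp (- t\<^sup>2 / 2)" ..
  have "integrable lborel (\<lambda>x. Re (std_normal_density x *\<^sub>R iexp (t * x)))"
    using int2 by (rule integrable_Re)
  hence "integrable lborel (\<lambda>x. std_normal_density x * cos (t * x))" by (simp add: Re_exp)
  with v show ?thesis by (simp add: has_bochner_integral_iff)
qed

lemma gauss_cos:
  fixes a d :: real assumes a: "a > 0"
  shows "has_bochner_integral lborel (\<lambda>x. exp (- a * x\<^sup>2) * cos (d * x)) (sqrt (pi / a) * exp (- d\<^sup>2 / (4 * a)))"
proof -
  define c where "c = sqrt (2 * a)"
  have c: "c > 0" "c\<^sup>2 = 2 * a" using a by (auto simp: c_def)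
  have "has_bochner_integral lborel (\<lambda>x. std_normal_density (0 + c * x) * cos ((d / c) * (0 + c * x))) (exp (- (d / c)\<^sup>2 / 2) / \<bar>c\<bar>)"
    by (rule hbi_affine[OF std_normal_cos]) (use c in auto)
  hence "has_bochner_integral lborel (\<lambda>x. sqrt (2 * pi) * (std_normal_density (0 + c * x) * cos ((d / c) * (0 + c * x)))) (sqrt (2 * pi) * (exp (- (d / c)\<^sup>2 / 2) / \<bar>c\<bar>))"
    by (rule has_bochner_integral_mult_right)
  moreover have "sqrt (2 * pi) * (std_normal_density (0 + c * x) * cos ((d / c) * (0 + c * x))) = exp (- a * x\<^sup>2) * cos (d * x)" for x
  proof -
    have "(c * x)\<^sup>2 / 2 = a * x\<^sup>2" using c by (simp add: power_mult_distrib)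
    then show ?thesis using c by (simp add: std_normal_density_def)
  qed
  moreover have "sqrt (2 * pi) * (exp (- (d / c)\<^sup>2 / 2) / \<bar>c\<bar>) = sqrt (pi / a) * exp (- d\<^sup>2 / (4 * a))"
  proof -
    have "(d / c)\<^sup>2 / 2 = d\<^sup>2 / (4 * a)" using c by (simp add: power_divide)
    moreover have "sqrt (2 * pi) / c = sqrt (pi / a)" using a c unfolding c_def
      by (simp add: real_sqrt_divide[symmetric])
    ultimately have "sqrt (2 * pi) * (exp (- (d / c)\<^sup>2 / 2) / \<bar>c\<bar>) = (sqrt (2 * pi) / c) * exp (- d\<^sup>2 / (4 * a))"
      using c by (simp add: field_simps)
    also have "\<dots> = sqrt (pi / a) * exp (- d\<^sup>2 / (4 * a))" using \<open>sqrt (2 * pi) / c = sqrt (pi / a)\<close> by simp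
    finally show ?thesis .
  qed
  ultimately show ?thesis by simp
qed

lemma B1:
  fixes f :: "real \<Rightarrow> real"
  assumes m: "(\<lambda>x. indicator S x * f x) \<in> borel_measurable borel"
    and a: "f absolutely_integrable_on S" and i: "integral S f = I"
  shows "has_bochner_integral lborel (\<lambda>x. indicator S x * f x) I"
proof -
  have "integrable lebesgue (\<lambda>x. indicator S x * f x)"
    using a by (simp add: set_integrable_def)
  hence int: "integrable lborel (\<lambda>x. indicator S x * f x)"
    using integrable_completion[of "\<lambda>x. indicator S x * f x" lborel] m by simp
  have "(LINT x:S | lebesgue. f x) = I" using set_lebesgue_integral_eq_integral(2)[OF a] i by simp
  hence "integral\<^sup>L lebesgue (\<lambda>x. indicator S x * f x) = I" by (simp add: set_lebesgue_integral_def)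
  hence "integral\<^sup>L lborel (\<lambda>x. indicator S x * f x) = I"
    using integral_completion[of "\<lambda>x. indicator S x * f x" lborel] m by simp
  with int show ?thesis by (simp add: has_bochner_integral_iff)
qed

lemma meas_ind:
  fixes f :: "real \<Rightarrow> real"
  assumes "S \<in> sets borel" "continuous_on S f"
  shows "(\<lambda>x. indicator S x * f x) \<in> borel_measurable borel"
  using borel_measurable_continuous_on_indicator[OF assms] by simp

lemma B2:
  fixes f :: "real \<Rightarrow> real"
  assumes h: "has_bochner_integral lborel (\<lambda>x. indicator S x * f x) I"
  shows "f absolutely_integrable_on S \<and> integral S f = I"
proof -
  have int: "integrable lborel (\<lambda>x. indicator S x * f x)" and v: "integral\<^sup>L lborel (\<lambda>x. indicator S x * f x) = I"
    using h by (auto simp: has_bochner_integral_iff)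
  have m: "(\<lambda>x. indicator S x * f x) \<in> borel_measurable borel"
    using borel_measurable_integrable[OF int] by simp
  have "integrable lebesgue (\<lambda>x. indicator S x * f x)"
    using integrable_completion[of "\<lambda>x. indicator S x * f x" lborel] m int by simp
  hence a: "f absolutely_integrable_on S" by (simp add: set_integrable_def)
  have "integral\<^sup>L lebesgue (\<lambda>x. indicator S x * f x) = I"
    using integral_completion[of "\<lambda>x. indicator S x * f x" lborel] m v by simp
  hence "(LINT x:S | lebesgue. f x) = I" by (simp add: set_lebesgue_integral_def)
  with a set_lebesgue_integral_eq_integral(2)[OF a] show ?thesis by simp
qed

lemma levy_integral:
  fixes a b :: real assumes a: "a > 0" and b: "b > 0"
  shows "has_bochner_integral lborel
     (\<lambda>t. indicator {0<..} t * (exp (- a * t - b / t) / (t * sqrt t)))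
     (sqrt (pi / b) * exp (- 2 * sqrt (a * b)))"
proof -
  define S :: "real set" where "S = {0<..}"
  define E where "E t = exp (- a * t - b / t)" for t
  define h1 where "h1 t = E t / (t * sqrt t)" for t
  define h2 where "h2 t = E t / sqrt t" for t
  define w where "w t = sqrt b / sqrt t - sqrt a * sqrt t" for t
  define w' where "w' t = - (sqrt b / (2 * t * sqrt t) + sqrt a / (2 * sqrt t))" for t
  define K where "K = exp (2 * sqrt (a * b))"
  have K: "K > 0" by (simp add: K_def)
  have der: "(w has_field_derivative w' t) (at t within S)" if "t \<in> S" for t
  proof -
    have t: "t > 0" using that by (simp add: S_def)
    show ?thesis unfolding w_def w'_def
      using t by (auto intro!: derivative_eq_intros simp: field_simps power2_eq_square)
  qed
  have inj: "inj_on w S"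
  proof (rule inj_onI)
    fix s t assume "s \<in> S" "t \<in> S" "w s = w t"
    hence s: "s > 0" and t: "t > 0" by (auto simp: S_def)
    have mono: "w t2 < w t1" if "0 < t1" "t1 < t2" for t1 t2
    proof -
      have "sqrt t1 < sqrt t2" using that by simp
      moreover have "sqrt t1 > 0" using that by simp
      ultimately have "sqrt b / sqrt t2 < sqrt b / sqrt t1" using b
        by (simp add: frac_less2)
      moreover have "sqrt a * sqrt t1 < sqrt a * sqrt t2" using a \<open>sqrt t1 < sqrt t2\<close> by simp
      ultimately show ?thesis unfolding w_def by simp
    qed
    show "s = t"
    proof (rule ccontr)
      assume "s \<noteq> t"
      hence "s < t \<or> t < s" by auto
      thus False using mono[of s t] mono[of t s] s t \<open>w s = w t\<close> by auto
    qed
  qed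
  have img: "w ` S = UNIV"
  proof (intro set_eqI iffI)
    fix y :: real
    define r where "r = (- y + sqrt (y\<^sup>2 + 4 * sqrt a * sqrt b)) / (2 * sqrt a)"
    have "sqrt (y\<^sup>2) < sqrt (y\<^sup>2 + 4 * sqrt a * sqrt b)"
      using a b by (intro real_sqrt_less_mono) simp
    hence "\<bar>y\<bar> < sqrt (y\<^sup>2 + 4 * sqrt a * sqrt b)" by simp
    hence r: "r > 0" using a unfolding r_def by (intro divide_pos_pos) auto
    have sq: "(sqrt (y\<^sup>2 + 4 * sqrt a * sqrt b))\<^sup>2 = y\<^sup>2 + 4 * sqrt a * sqrt b"
      using a b by (intro real_sqrt_pow2) (auto intro: add_nonneg_nonneg)
    have quad: "sqrt a * r\<^sup>2 + y * r - sqrt b = 0"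
    proof -
      define D where "D = sqrt (y\<^sup>2 + 4 * sqrt a * sqrt b)"
      have tr: "2 * sqrt a * r = D - y" using a unfolding r_def D_def by simp
      have "4 * sqrt a * (sqrt a * r\<^sup>2 + y * r) = (2 * sqrt a * r)\<^sup>2 + 2 * y * (2 * sqrt a * r)"
        by (simp add: power2_eq_square algebra_simps)
      also have "\<dots> = D\<^sup>2 - y\<^sup>2" unfolding tr by (simp add: power2_eq_square algebra_simps)
      also have "\<dots> = 4 * sqrt a * sqrt b" using sq unfolding D_def by simp
      finally have "4 * sqrt a * (sqrt a * r\<^sup>2 + y * r) = 4 * sqrt a * sqrt b" .
      hence "sqrt a * r\<^sup>2 + y * r = sqrt b" using a by simp
      thus ?thesis by simp
    qed
    have "w (r\<^sup>2) = sqrt b / r - sqrt a * r" using r unfolding w_def by simp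
    also have "\<dots> = y" using r quad by (simp add: field_simps power2_eq_square)
    finally have "w (r\<^sup>2) = y" .
    moreover have "r\<^sup>2 \<in> S" using r by (simp add: S_def)
    ultimately show "y \<in> w ` S" by (metis image_eqI)
  qed auto
  have wsq: "(w t)\<^sup>2 = b / t + a * t - 2 * sqrt (a * b)" if "t > 0" for t
    using that a b unfolding w_def
    by (simp add: power2_eq_square field_simps real_sqrt_mult)
  have gl: "has_bochner_integral lborel (\<lambda>y. indicator UNIV y * exp (- y\<^sup>2)) (sqrt pi)"
    using gauss_shift[of 1 0] by simp
  have rhs: "(\<lambda>y. exp (- y\<^sup>2)) absolutely_integrable_on w ` S \<and> integral (w ` S) (\<lambda>y. exp (- y\<^sup>2)) = sqrt pi"
    unfolding img using B2[OF gl] .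
  have S_leb: "S \<in> sets lebesgue" by (simp add: S_def)
  have cv: "(\<lambda>t. \<bar>w' t\<bar> * exp (- (w t)\<^sup>2)) absolutely_integrable_on S \<and>
            integral S (\<lambda>t. \<bar>w' t\<bar> * exp (- (w t)\<^sup>2)) = sqrt pi"
    using has_absolute_integral_change_of_variables_1'[OF S_leb der inj, of "\<lambda>y. exp (- y\<^sup>2)" "sqrt pi"] rhs
    by blast
  have eq1: "indicator S t * (\<bar>w' t\<bar> * exp (- (w t)\<^sup>2)) = indicator S t * (K * (sqrt b / 2 * h1 t + sqrt a / 2 * h2 t))" for t
  proof (cases "t > 0")
    case True
    have "\<bar>w' t\<bar> = sqrt b / (2 * t * sqrt t) + sqrt a / (2 * sqrt t)"
    proof -
      have "sqrt b / (2 * t * sqrt t) + sqrt a / (2 * sqrt t) \<ge> 0" using True a b by simp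
      thus ?thesis unfolding w'_def by (simp only: abs_minus_cancel abs_of_nonneg)
    qed
    moreover have "exp (- (w t)\<^sup>2) = K * E t"
      using True unfolding wsq[OF True] K_def E_def by (simp add: exp_add[symmetric] algebra_simps)
    ultimately show ?thesis unfolding h1_def h2_def by (simp add: field_simps)
  qed (simp add: S_def)
  have meas_w: "(\<lambda>t. indicator S t * (K * (sqrt b / 2 * h1 t + sqrt a / 2 * h2 t))) \<in> borel_measurable borel"
    unfolding S_def h1_def h2_def E_def by (intro meas_ind continuous_intros) auto
  have hb: "has_bochner_integral lborel (\<lambda>t. indicator S t * (K * (sqrt b / 2 * h1 t + sqrt a / 2 * h2 t))) (sqrt pi)"
  proof -
    have "has_bochner_integral lborel (\<lambda>t. indicator S t * (\<bar>w' t\<bar> * exp (- (w t)\<^sup>2))) (sqrt pi)"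
      using meas_w unfolding eq1[symmetric] by (intro B1 cv[THEN conjunct1] cv[THEN conjunct2])
    thus ?thesis unfolding eq1 .
  qed
  have intsum: "integrable lborel (\<lambda>t. indicator S t * (K * (sqrt b / 2 * h1 t + sqrt a / 2 * h2 t)))"
    using hb by (simp add: has_bochner_integral_iff)
  have nn1: "h1 t \<ge> 0" "h2 t \<ge> 0" if "t > 0" for t
    using that unfolding h1_def h2_def E_def by auto
  have int1: "integrable lborel (\<lambda>t. indicator S t * h1 t)"
  proof (rule Bochner_Integration.integrable_bound[OF integrable_mult_right[OF intsum, of "2 / (K * sqrt b)"]])
    show "(\<lambda>t. indicator S t * h1 t) \<in> borel_measurable lborel"
      unfolding S_def h1_def E_def measurable_lborel2 by (intro meas_ind continuous_intros) auto
    show "AE t in lborel. norm (indicator S t * h1 t) \<le> norm (2 / (K * sqrt b) * (indicator S t * (K * (sqrt b / 2 * h1 t + sqrt a / 2 * h2 t))))"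
    proof (rule AE_I2)
      fix t show "norm (indicator S t * h1 t) \<le> norm (2 / (K * sqrt b) * (indicator S t * (K * (sqrt b / 2 * h1 t + sqrt a / 2 * h2 t))))"
      proof (cases "t > 0")
        case True
        have "2 / (K * sqrt b) * (K * (sqrt b / 2 * h1 t + sqrt a / 2 * h2 t)) = h1 t + sqrt a / sqrt b * h2 t"
          using K b by (simp add: field_simps)
        moreover have "sqrt a / sqrt b * h2 t \<ge> 0" using nn1[OF True] a b by simp
        ultimately show ?thesis using True nn1[OF True] K b by (simp add: S_def)
      qed (simp add: S_def)
    qed
  qed
  have int2: "integrable lborel (\<lambda>t. indicator S t * h2 t)"
  proof (rule Bochner_Integration.integrable_bound[OF integrable_mult_right[OF intsum, of "2 / (K * sqrt a)"]])
    show "(\<lambda>t. indicator S t * h2 t) \<in> borel_measurable lborel"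
      unfolding S_def h2_def E_def measurable_lborel2 by (intro meas_ind continuous_intros) auto
    show "AE t in lborel. norm (indicator S t * h2 t) \<le> norm (2 / (K * sqrt a) * (indicator S t * (K * (sqrt b / 2 * h1 t + sqrt a / 2 * h2 t))))"
    proof (rule AE_I2)
      fix t show "norm (indicator S t * h2 t) \<le> norm (2 / (K * sqrt a) * (indicator S t * (K * (sqrt b / 2 * h1 t + sqrt a / 2 * h2 t))))"
      proof (cases "t > 0")
        case True
        have "2 / (K * sqrt a) * (K * (sqrt b / 2 * h1 t + sqrt a / 2 * h2 t)) = sqrt b / sqrt a * h1 t + h2 t"
          using K a by (simp add: field_simps)
        moreover have "sqrt b / sqrt a * h1 t \<ge> 0" using nn1[OF True] a b by simp
        ultimately show ?thesis using True nn1[OF True] K a by (simp add: S_def)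
      qed (simp add: S_def)
    qed
  qed
  define P where "P = integral\<^sup>L lborel (\<lambda>t. indicator S t * h1 t)"
  define Q where "Q = integral\<^sup>L lborel (\<lambda>t. indicator S t * h2 t)"
  have "integral\<^sup>L lborel (\<lambda>t. indicator S t * (K * (sqrt b / 2 * h1 t + sqrt a / 2 * h2 t)))
      = integral\<^sup>L lborel (\<lambda>t. (K * sqrt b / 2) * (indicator S t * h1 t) + (K * sqrt a / 2) * (indicator S t * h2 t))"
    by (intro Bochner_Integration.integral_cong) (auto simp: algebra_simps)
  also have "\<dots> = (K * sqrt b / 2) * P + (K * sqrt a / 2) * Q"
    using int1 int2 unfolding P_def Q_def by simp
  finally have sum: "(K * sqrt b / 2) * P + (K * sqrt a / 2) * Q = sqrt pi"
    using hb by (simp add: has_bochner_integral_iff)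
  define c where "c = b / a"
  have c: "c > 0" using a b by (simp add: c_def)
  define g where "g u = c / u" for u :: real
  have derg: "(g has_field_derivative (- c / u\<^sup>2)) (at u within S)" if "u \<in> S" for u
    using that unfolding g_def S_def by (auto intro!: derivative_eq_intros simp: power2_eq_square)
  have injg: "inj_on g S" unfolding g_def S_def using c by (auto intro!: inj_onI simp: field_simps)
  have imgg: "g ` S = S"
  proof (intro set_eqI iffI)
    fix x assume "x \<in> g ` S" thus "x \<in> S" using c by (auto simp: g_def S_def)
  next
    fix x assume "x \<in> S"
    hence "x > 0" by (simp add: S_def)
    hence "g (c / x) = x" "c / x \<in> S" using c by (auto simp: g_def S_def)
    thus "x \<in> g ` S" by (metis image_eqI)
  qed
  have r2: "h2 absolutely_integrable_on g ` S \<and> integral (g ` S) h2 = Q"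
    unfolding imgg Q_def using B2[of S h2] int2 by (simp add: has_bochner_integral_iff)
  have cv2: "(\<lambda>u. \<bar>- c / u\<^sup>2\<bar> * h2 (g u)) absolutely_integrable_on S \<and> integral S (\<lambda>u. \<bar>- c / u\<^sup>2\<bar> * h2 (g u)) = Q"
    using has_absolute_integral_change_of_variables_1'[OF S_leb derg injg, of h2 Q] r2 by blast
  have eq2: "\<bar>- c / u\<^sup>2\<bar> * h2 (g u) = sqrt c * h1 u" if "u \<in> S" for u
  proof -
    have u: "u > 0" using that by (simp add: S_def)
    have "E (c / u) = E u" unfolding E_def c_def using a b u by (simp add: field_simps)
    have su: "sqrt u * sqrt u = u" "sqrt c * sqrt c = c" using u c by simp_all
    have "\<bar>- c / u\<^sup>2\<bar> * h2 (g u) = c / u\<^sup>2 * (E u / (sqrt c / sqrt u))"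
      unfolding h2_def g_def \<open>E (c / u) = E u\<close> using u c by (simp add: real_sqrt_divide)
    also have "\<dots> = (sqrt c * sqrt c) / ((sqrt u * sqrt u) * (sqrt u * sqrt u)) * (E u * sqrt u / sqrt c)"
      unfolding su power2_eq_square by simp
    also have "\<dots> = sqrt c * (E u / ((sqrt u * sqrt u) * sqrt u))"
      using u c by (simp add: field_simps)
    also have "\<dots> = sqrt c * h1 u" unfolding h1_def su ..
    finally show ?thesis .
  qed
  have "integral S (\<lambda>u. sqrt c * h1 u) = Q"
    using cv2 integral_cong[of S "\<lambda>u. \<bar>- c / u\<^sup>2\<bar> * h2 (g u)" "\<lambda>u. sqrt c * h1 u"] eq2 by simp
  moreover have "integral S (\<lambda>u. sqrt c * h1 u) = sqrt c * P"
  proof -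
    have "h1 absolutely_integrable_on S \<and> integral S h1 = P"
      using B2[of S h1 P] int1 unfolding P_def by (simp add: has_bochner_integral_iff)
    thus ?thesis by simp
  qed
  ultimately have QP: "Q = sqrt c * P" by simp
  have "sqrt a * sqrt c = sqrt b" unfolding c_def using a by (simp add: real_sqrt_divide)
  hence "K * sqrt b * P = sqrt pi" using sum QP by (simp add: algebra_simps)
  hence "P = sqrt pi / (K * sqrt b)" using K b by (simp add: field_simps)
  also have "\<dots> = sqrt (pi / b) * exp (- 2 * sqrt (a * b))"
    unfolding K_def by (simp add: real_sqrt_divide exp_minus field_simps)
  finally have Pv: "P = sqrt (pi / b) * exp (- 2 * sqrt (a * b))" .
  show ?thesis using int1 Pv unfolding P_def h1_def E_def S_def by (simp add: has_bochner_integral_iff)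
qed

lemma borel_measurable_cosh_real[measurable]: "(cosh :: real \<Rightarrow> real) \<in> borel_measurable borel"
  by (intro borel_measurable_continuous_onI continuous_intros)

lemma even_half:
  fixes \<phi> :: "real \<Rightarrow> real"
  assumes int: "integrable lborel \<phi>" and ev: "\<And>x. \<phi> (- x) = \<phi> x"
  shows "has_bochner_integral lborel (\<lambda>x. indicator {0..} x * \<phi> x) (integral\<^sup>L lborel \<phi> / 2)"
proof -
  have i1: "integrable lborel (\<lambda>x. indicator {0..} x * \<phi> x)"
    using integrable_mult_indicator[of "{0..}" lborel \<phi>] int by simp
  have i2: "integrable lborel (\<lambda>x. indicator {..<0} x * \<phi> x)"
    using integrable_mult_indicator[of "{..<0}" lborel \<phi>] int by simp
  have "integral\<^sup>L lborel \<phi> = integral\<^sup>L lborel (\<lambda>x. indicator {0..} x * \<phi> x + indicator {..<0} x * \<phi> x)"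
    by (intro Bochner_Integration.integral_cong) (auto simp: indicator_def)
  also have "\<dots> = integral\<^sup>L lborel (\<lambda>x. indicator {0..} x * \<phi> x) + integral\<^sup>L lborel (\<lambda>x. indicator {..<0} x * \<phi> x)"
    using i1 i2 by simp
  also have "integral\<^sup>L lborel (\<lambda>x. indicator {..<0} x * \<phi> x) = integral\<^sup>L lborel (\<lambda>x. indicator {..<0} (0 + (-1) * x) * \<phi> (0 + (-1) * x))"
    using lborel_integral_real_affine[of "-1" "\<lambda>x. indicator {..<0} x * \<phi> x" 0] by simp
  also have "\<dots> = integral\<^sup>L lborel (\<lambda>x. indicator {0..} x * \<phi> x)"
  proof (rule integral_cong_AE)
    show "AE x in lborel. indicator {..<0} (0 + (-1) * x) * \<phi> (0 + (-1) * x) = indicator {0..} x * \<phi> x"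
      using AE_lborel_singleton[of "0::real"] by eventually_elim (auto simp: indicator_def ev)
  qed (use int in \<open>auto simp: borel_measurable_integrable\<close>)
  finally have "integral\<^sup>L lborel \<phi> = 2 * integral\<^sup>L lborel (\<lambda>x. indicator {0..} x * \<phi> x)" by simp
  with i1 show ?thesis by (simp add: has_bochner_integral_iff)
qed

lemma cosh_quad: "cosh (u::real) \<ge> u\<^sup>2 / 4"
proof -
  have "exp \<bar>u\<bar> \<ge> 1 + \<bar>u\<bar> + \<bar>u\<bar>\<^sup>2 / 2" by (rule exp_lower_Taylor_quadratic) simp
  moreover have "cosh u \<ge> exp \<bar>u\<bar> / 2"
    by (cases "u \<ge> 0") (auto simp: cosh_def)
  ultimately show ?thesis by simp
qed

lemma cosh_kernel_int:
  fixes z :: real assumes z: "z > 0"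
  shows "integrable lborel (\<lambda>u. exp (- u) * exp (- z * cosh u))"
proof (rule Bochner_Integration.integrable_bound)
  have "has_bochner_integral lborel (\<lambda>y. exp ((-1) * y - (z/4) * y\<^sup>2)) (sqrt (pi / (z/4)) * exp ((-1)\<^sup>2 / (4 * (z/4))))"
    by (rule gauss_shift) (use z in simp)
  thus "integrable lborel (\<lambda>y. exp ((-1) * y - (z/4) * y\<^sup>2))" by (simp add: has_bochner_integral_iff)
  show "(\<lambda>u. exp (- u) * exp (- z * cosh u)) \<in> borel_measurable lborel" by measurable
  show "AE u in lborel. norm (exp (- u) * exp (- z * cosh u)) \<le> norm (exp ((-1) * u - (z/4) * u\<^sup>2))"
  proof (rule AE_I2)
    fix u :: real
    have "z * (u\<^sup>2 / 4) \<le> z * cosh u" using z cosh_quad[of u] by (intro mult_left_mono) auto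
    hence "exp (- u) * exp (- z * cosh u) \<le> exp ((-1) * u - (z/4) * u\<^sup>2)"
      by (simp add: exp_add[symmetric])
    thus "norm (exp (- u) * exp (- z * cosh u)) \<le> norm (exp ((-1) * u - (z/4) * u\<^sup>2))" by simp
  qed
qed

lemma besselK1_rep:
  fixes z :: real assumes z: "z > 0"
  shows "has_bochner_integral lborel (\<lambda>u. exp (- u) * exp (- z * cosh u)) (2 * BesselK1 z)"
    and "set_integrable lborel {0..} (\<lambda>t. exp (- z * cosh t) * cosh t)"
proof -
  define \<psi> where "\<psi> u = exp (- u) * exp (- z * cosh u)" for u
  have i\<psi>: "integrable lborel \<psi>" unfolding \<psi>_def by (rule cosh_kernel_int[OF z])
  have refl: "integral\<^sup>L lborel \<psi> = integral\<^sup>L lborel (\<lambda>u. \<psi> (0 + (-1) * u))"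
    using lborel_integral_real_affine[of "-1" \<psi> 0] by simp
  have i\<psi>': "integrable lborel (\<lambda>u. \<psi> (0 + (-1) * u))"
    by (rule lborel_integrable_real_affine[OF i\<psi>]) simp
  define \<phi> where "\<phi> u = exp (- z * cosh u) * cosh u" for u
  have \<phi>eq: "\<phi> u = (\<psi> u + \<psi> (0 + (-1) * u)) / 2" for u
    unfolding \<phi>_def \<psi>_def cosh_def by (simp add: field_simps)
  have i\<phi>: "integrable lborel \<phi>" unfolding \<phi>eq using i\<psi> i\<psi>' by simp
  have v\<phi>: "integral\<^sup>L lborel \<phi> = integral\<^sup>L lborel \<psi>"
    unfolding \<phi>eq using i\<psi> i\<psi>' refl by simp
  have ev: "\<phi> (- x) = \<phi> x" for x unfolding \<phi>_def by simp
  have h: "has_bochner_integral lborel (\<lambda>x. indicator {0..} x * \<phi> x) (integral\<^sup>L lborel \<psi> / 2)"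
    using even_half[OF i\<phi> ev] v\<phi> by simp
  have "BesselK1 z = integral\<^sup>L lborel (\<lambda>x. indicator {0..} x * \<phi> x)"
    unfolding BesselK1_def \<phi>_def set_lebesgue_integral_def by simp
  hence "BesselK1 z = integral\<^sup>L lborel \<psi> / 2" using h by (simp add: has_bochner_integral_iff)
  thus "has_bochner_integral lborel (\<lambda>u. exp (- u) * exp (- z * cosh u)) (2 * BesselK1 z)"
    using i\<psi> unfolding \<psi>_def by (simp add: has_bochner_integral_iff)
  show "set_integrable lborel {0..} (\<lambda>t. exp (- z * cosh t) * cosh t)"
    using h unfolding set_integrable_def \<phi>_def by (simp add: has_bochner_integral_iff)
qed

lemma kernel_K1:
  fixes A B :: real assumes A: "A > 0" and B: "B > 0"
  shows "has_bochner_integral lborel (\<lambda>s. indicator {0<..} s * (exp (- A * s - B / s) / s\<^sup>2))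
           (2 * sqrt (A / B) * BesselK1 (2 * sqrt (A * B)))"
proof -
  define z where "z = 2 * sqrt (A * B)"
  define c where "c = sqrt (B / A)"
  have z: "z > 0" and c: "c > 0" using A B by (auto simp: z_def c_def)
  define f where "f s = exp (- A * s - B / s) / s\<^sup>2" for s :: real
  define g where "g u = c * exp u" for u :: real
  have der: "(g has_field_derivative g u) (at u within UNIV)" for u
    unfolding g_def by (auto intro!: derivative_eq_intros)
  have inj: "inj_on g UNIV" unfolding g_def using c by (auto intro!: inj_onI)
  have img: "g ` UNIV = {0<..}"
  proof (intro set_eqI iffI)
    fix x assume "x \<in> g ` UNIV" thus "x \<in> {0<..}" using c by (auto simp: g_def)
  next
    fix x :: real assume "x \<in> {0<..}"
    hence x: "x > 0" by simp
    have "g (ln (x / c)) = x" unfolding g_def using x c by simp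
    thus "x \<in> g ` UNIV" by (metis rangeI)
  qed
  have Ac: "A * c = sqrt A * sqrt B" unfolding c_def using A B
    by (simp add: real_sqrt_divide field_simps)
  have Bc: "B / c = sqrt A * sqrt B" unfolding c_def using A B
    by (simp add: real_sqrt_divide field_simps)
  have eq: "\<bar>g u\<bar> * f (g u) = (1 / c) * (exp (- u) * exp (- z * cosh u))" for u
  proof -
    have "A * g u + B / g u = sqrt A * sqrt B * (exp u + exp (- u))"
    proof -
      have "A * g u = (A * c) * exp u" unfolding g_def by simp
      moreover have "B / g u = (B / c) * exp (- u)" unfolding g_def using c by (simp add: exp_minus field_simps)
      ultimately show ?thesis unfolding Ac Bc by (simp add: algebra_simps)
    qed
    hence e: "- A * g u - B / g u = - z * cosh u"
      unfolding z_def cosh_def by (simp add: real_sqrt_mult algebra_simps)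
    have "\<bar>g u\<bar> * f (g u) = exp (- A * g u - B / g u) / g u"
      unfolding f_def using c by (simp add: g_def power2_eq_square)
    also have "\<dots> = exp (- z * cosh u) / g u" by (simp only: e)
    also have "\<dots> = (1 / c) * (exp (- u) * exp (- z * cosh u))"
      unfolding g_def using c by (simp add: exp_minus field_simps)
    finally show ?thesis .
  qed
  have hu: "has_bochner_integral lborel (\<lambda>u. indicator UNIV u * (\<bar>g u\<bar> * f (g u))) ((1 / c) * (2 * BesselK1 z))"
    unfolding eq using has_bochner_integral_mult_right[OF besselK1_rep(1)[OF z], of "1 / c"] by simp
  have "(\<lambda>u. \<bar>g u\<bar> * f (g u)) absolutely_integrable_on UNIV \<and> integral UNIV (\<lambda>u. \<bar>g u\<bar> * f (g u)) = (1 / c) * (2 * BesselK1 z)"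
    by (rule B2[OF hu])
  hence cv: "f absolutely_integrable_on {0<..} \<and> integral {0<..} f = (1 / c) * (2 * BesselK1 z)"
    using has_absolute_integral_change_of_variables_1'[of UNIV g g f "(1 / c) * (2 * BesselK1 z)"] der inj img
    by simp
  have m: "(\<lambda>s. indicator {0<..} s * f s) \<in> borel_measurable borel"
    unfolding f_def by (intro meas_ind continuous_intros) auto
  have "has_bochner_integral lborel (\<lambda>s. indicator {0<..} s * f s) ((1 / c) * (2 * BesselK1 z))"
    using B1[OF m] cv by blast
  moreover have "(1 / c) * (2 * BesselK1 z) = 2 * sqrt (A / B) * BesselK1 (2 * sqrt (A * B))"
    unfolding c_def z_def using A B by (simp add: real_sqrt_divide)
  ultimately show ?thesis unfolding f_def by simp
qed

lemma fubini_dom: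
  fixes F H :: "real \<Rightarrow> real \<Rightarrow> real" and G :: "real \<Rightarrow> real"
  assumes mF: "(\<lambda>(x, y). F x y) \<in> borel_measurable (lborel \<Otimes>\<^sub>M lborel)"
    and mH: "(\<lambda>(x, y). H x y) \<in> borel_measurable (lborel \<Otimes>\<^sub>M lborel)"
    and bnd: "\<And>x y. \<bar>F x y\<bar> \<le> H x y"
    and Hx: "\<And>x. has_bochner_integral lborel (H x) (G x)"
    and iG: "integrable lborel G"
  shows "integrable (lborel \<Otimes>\<^sub>M lborel) (\<lambda>(x, y). F x y)"
    and "(\<integral>y. (\<integral>x. F x y \<partial>lborel) \<partial>lborel) = (\<integral>x. (\<integral>y. F x y \<partial>lborel) \<partial>lborel)"
proof -
  have Hnn: "H x y \<ge> 0" for x y using bnd[of x y] by linarith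
  have "integrable (lborel \<Otimes>\<^sub>M lborel) (\<lambda>p. case_prod H p)"
  proof (rule lborel_pair.Fubini_integrable)
    show "(\<lambda>p. case_prod H p) \<in> borel_measurable (lborel \<Otimes>\<^sub>M lborel)" using mH by simp
    have "(\<lambda>x. \<integral>y. norm (case_prod H (x, y)) \<partial>lborel) = G"
    proof
      fix x show "(\<integral>y. norm (case_prod H (x, y)) \<partial>lborel) = G x"
        using Hx[of x] Hnn by (simp add: has_bochner_integral_iff)
    qed
    thus "integrable lborel (\<lambda>x. \<integral>y. norm (case_prod H (x, y)) \<partial>lborel)" using iG by simp
    show "AE x in lborel. integrable lborel (\<lambda>y. case_prod H (x, y))"
      using Hx by (simp add: has_bochner_integral_iff)
  qed
  thus iF: "integrable (lborel \<Otimes>\<^sub>M lborel) (\<lambda>(x, y). F x y)"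
  proof (rule Bochner_Integration.integrable_bound)
    show "AE p in lborel \<Otimes>\<^sub>M lborel. norm (case p of (x, y) \<Rightarrow> F x y) \<le> norm (case_prod H p)"
    proof (rule AE_I2)
      fix p :: "real \<times> real"
      obtain x y where p: "p = (x, y)" by (cases p)
      show "norm (case p of (x, y) \<Rightarrow> F x y) \<le> norm (case_prod H p)"
        using bnd[of x y] Hnn[of x y] unfolding p by simp
    qed
  qed (use mF in auto)
  show "(\<integral>y. (\<integral>x. F x y \<partial>lborel) \<partial>lborel) = (\<integral>x. (\<integral>y. F x y \<partial>lborel) \<partial>lborel)"
    by (rule lborel_pair.Fubini_integral[OF iF])
qed

lemma cos_ident:
  fixes \<alpha> y \<delta> :: real assumes \<alpha>: "\<alpha> > 0" and y: "y > 0"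
  shows "has_bochner_integral lborel (\<lambda>t. exp (- y * sqrt (t\<^sup>2 + \<alpha>\<^sup>2)) * cos (\<delta> * t))
           (2 * \<alpha> * y * BesselK1 (\<alpha> * sqrt (\<delta>\<^sup>2 + y\<^sup>2)) / sqrt (\<delta>\<^sup>2 + y\<^sup>2))"
proof -
  define k where "k = y / (2 * sqrt pi)"
  define F where "F s t = indicator {0<..} s * (k * (exp (- (t\<^sup>2 + \<alpha>\<^sup>2) * s - (y\<^sup>2 / 4) / s) / (s * sqrt s))) * cos (\<delta> * t)" for s t :: real
  define H where "H s t = indicator {0<..} s * (k * (exp (- (t\<^sup>2 + \<alpha>\<^sup>2) * s - (y\<^sup>2 / 4) / s) / (s * sqrt s)))" for s t :: real
  define G where "G s = indicator {0<..} s * ((y / 2) * (exp (- \<alpha>\<^sup>2 * s - (y\<^sup>2 / 4) / s) / s\<^sup>2))" for s :: real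
  define G2 where "G2 s = indicator {0<..} s * ((y / 2) * (exp (- \<alpha>\<^sup>2 * s - ((\<delta>\<^sup>2 + y\<^sup>2) / 4) / s) / s\<^sup>2))" for s :: real
  have k: "k > 0" using y by (simp add: k_def)
  have mF: "(\<lambda>(s, t). F s t) \<in> borel_measurable (lborel \<Otimes>\<^sub>M lborel)"
    unfolding F_def by measurable
  have mH: "(\<lambda>(s, t). H s t) \<in> borel_measurable (lborel \<Otimes>\<^sub>M lborel)"
    unfolding H_def by measurable
  have bnd: "\<bar>F s t\<bar> \<le> H s t" for s t
  proof -
    have "H s t \<ge> 0" using k unfolding H_def by (auto simp: indicator_def)
    moreover have "\<bar>cos (\<delta> * t)\<bar> \<le> 1" by simp
    ultimately show ?thesis unfolding F_def H_def[symmetric]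
      by (simp add: abs_mult mult_left_le) 
  qed
  have Ht: "has_bochner_integral lborel (H s) (G s)" for s
  proof (cases "s > 0")
    case True
    define c where "c = k * (exp (- \<alpha>\<^sup>2 * s - (y\<^sup>2 / 4) / s) / (s * sqrt s))"
    have "H s = (\<lambda>t. c * (exp (- s * t\<^sup>2) * cos (0 * t)))"
      unfolding H_def c_def using True by (simp add: fun_eq_iff exp_add[symmetric] algebra_simps)
    moreover have "has_bochner_integral lborel (\<lambda>t. c * (exp (- s * t\<^sup>2) * cos (0 * t))) (c * (sqrt (pi / s) * exp (- 0\<^sup>2 / (4 * s))))"
      by (intro has_bochner_integral_mult_right gauss_cos True)
    moreover have "c * (sqrt (pi / s) * exp (- 0\<^sup>2 / (4 * s))) = G s"
    proof -
      have "sqrt s * sqrt s = s" using True by simp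
      thus ?thesis unfolding c_def k_def G_def using True
        by (simp add: real_sqrt_divide field_simps power2_eq_square)
    qed
    ultimately show ?thesis by simp
  qed (simp add: H_def[abs_def] G_def has_bochner_integral_zero)
  have Ft: "has_bochner_integral lborel (F s) (G2 s)" for s
  proof (cases "s > 0")
    case True
    define c where "c = k * (exp (- \<alpha>\<^sup>2 * s - (y\<^sup>2 / 4) / s) / (s * sqrt s))"
    have "F s = (\<lambda>t. c * (exp (- s * t\<^sup>2) * cos (\<delta> * t)))"
      unfolding F_def c_def using True by (simp add: fun_eq_iff exp_add[symmetric] algebra_simps)
    moreover have "has_bochner_integral lborel (\<lambda>t. c * (exp (- s * t\<^sup>2) * cos (\<delta> * t))) (c * (sqrt (pi / s) * exp (- \<delta>\<^sup>2 / (4 * s))))"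
      by (intro has_bochner_integral_mult_right gauss_cos True)
    moreover have "c * (sqrt (pi / s) * exp (- \<delta>\<^sup>2 / (4 * s))) = G2 s"
    proof -
      have "sqrt s * sqrt s = s" using True by simp
      moreover have "exp (- \<alpha>\<^sup>2 * s - (y\<^sup>2 / 4) / s) * exp (- \<delta>\<^sup>2 / (4 * s)) = exp (- \<alpha>\<^sup>2 * s - ((\<delta>\<^sup>2 + y\<^sup>2) / 4) / s)"
        by (subst exp_add[symmetric]) (simp add: add_divide_distrib)
      ultimately show ?thesis unfolding c_def k_def G2_def using True
        by (simp add: real_sqrt_divide field_simps power2_eq_square)
    qed
    ultimately show ?thesis by simp
  qed (simp add: F_def[abs_def] G2_def has_bochner_integral_zero)
  have KG: "has_bochner_integral lborel G ((y / 2) * (2 * sqrt (\<alpha>\<^sup>2 / (y\<^sup>2 / 4)) * BesselK1 (2 * sqrt (\<alpha>\<^sup>2 * (y\<^sup>2 / 4)))))"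
    unfolding G_def using has_bochner_integral_mult_right[OF kernel_K1[of "\<alpha>\<^sup>2" "y\<^sup>2 / 4"], of "y / 2"] \<alpha> y
    by (simp add: algebra_simps)
  hence iG: "integrable lborel G" by (simp add: has_bochner_integral_iff)
  define q where "q = sqrt (\<delta>\<^sup>2 + y\<^sup>2)"
  have q: "q > 0" using y by (simp add: q_def add_nonneg_pos)
  have KG2: "has_bochner_integral lborel G2 ((y / 2) * (2 * sqrt (\<alpha>\<^sup>2 / ((\<delta>\<^sup>2 + y\<^sup>2) / 4)) * BesselK1 (2 * sqrt (\<alpha>\<^sup>2 * ((\<delta>\<^sup>2 + y\<^sup>2) / 4)))))"
    unfolding G2_def using has_bochner_integral_mult_right[OF kernel_K1[of "\<alpha>\<^sup>2" "(\<delta>\<^sup>2 + y\<^sup>2) / 4"], of "y / 2"] \<alpha> y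
    by (simp add: algebra_simps add_nonneg_pos)
  have val: "(y / 2) * (2 * sqrt (\<alpha>\<^sup>2 / ((\<delta>\<^sup>2 + y\<^sup>2) / 4)) * BesselK1 (2 * sqrt (\<alpha>\<^sup>2 * ((\<delta>\<^sup>2 + y\<^sup>2) / 4))))
      = 2 * \<alpha> * y * BesselK1 (\<alpha> * q) / q"
  proof -
    have "sqrt (\<alpha>\<^sup>2 / ((\<delta>\<^sup>2 + y\<^sup>2) / 4)) = 2 * \<alpha> / q"
      unfolding q_def using \<alpha> by (simp add: real_sqrt_divide real_sqrt_mult)
    moreover have "2 * sqrt (\<alpha>\<^sup>2 * ((\<delta>\<^sup>2 + y\<^sup>2) / 4)) = \<alpha> * q"
      unfolding q_def using \<alpha> by (simp add: real_sqrt_divide real_sqrt_mult)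
    ultimately show ?thesis by simp
  qed
  note fub = fubini_dom[OF mF mH bnd Ht iG]
  have Fs: "has_bochner_integral lborel (\<lambda>s. F s t) (exp (- y * sqrt (t\<^sup>2 + \<alpha>\<^sup>2)) * cos (\<delta> * t))" for t
  proof -
    have a: "t\<^sup>2 + \<alpha>\<^sup>2 > 0" using \<alpha> by (simp add: add_nonneg_pos)
    have h: "has_bochner_integral lborel (\<lambda>s. (k * cos (\<delta> * t)) * (indicator {0<..} s * (exp (- (t\<^sup>2 + \<alpha>\<^sup>2) * s - (y\<^sup>2 / 4) / s) / (s * sqrt s))))
        ((k * cos (\<delta> * t)) * (sqrt (pi / (y\<^sup>2 / 4)) * exp (- 2 * sqrt ((t\<^sup>2 + \<alpha>\<^sup>2) * (y\<^sup>2 / 4)))))"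
      by (intro has_bochner_integral_mult_right levy_integral a) (use y in simp)
    have e1: "(k * cos (\<delta> * t)) * (sqrt (pi / (y\<^sup>2 / 4)) * exp (- 2 * sqrt ((t\<^sup>2 + \<alpha>\<^sup>2) * (y\<^sup>2 / 4))))
        = exp (- y * sqrt (t\<^sup>2 + \<alpha>\<^sup>2)) * cos (\<delta> * t)"
    proof -
      have "sqrt (pi / (y\<^sup>2 / 4)) = 2 * sqrt pi / y" using y by (simp add: real_sqrt_divide real_sqrt_mult)
      moreover have "2 * sqrt ((t\<^sup>2 + \<alpha>\<^sup>2) * (y\<^sup>2 / 4)) = y * sqrt (t\<^sup>2 + \<alpha>\<^sup>2)"
        using y by (simp add: real_sqrt_mult real_sqrt_divide)
      ultimately show ?thesis unfolding k_def using y by simp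
    qed
    have e2: "(\<lambda>s. (k * cos (\<delta> * t)) * (indicator {0<..} s * (exp (- (t\<^sup>2 + \<alpha>\<^sup>2) * s - (y\<^sup>2 / 4) / s) / (s * sqrt s)))) = (\<lambda>s. F s t)"
      unfolding F_def by (simp add: fun_eq_iff)
    show ?thesis using h unfolding e1 e2 .
  qed
  have "integrable lborel (\<lambda>t. \<integral>s. F s t \<partial>lborel)"
    by (rule lborel_pair.integrable_snd[OF fub(1)])
  moreover have "(\<lambda>t. \<integral>s. F s t \<partial>lborel) = (\<lambda>t. exp (- y * sqrt (t\<^sup>2 + \<alpha>\<^sup>2)) * cos (\<delta> * t))"
    using Fs by (simp add: has_bochner_integral_iff fun_eq_iff)
  ultimately have i1: "integrable lborel (\<lambda>t. exp (- y * sqrt (t\<^sup>2 + \<alpha>\<^sup>2)) * cos (\<delta> * t))" by simp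
  have "(\<integral>t. exp (- y * sqrt (t\<^sup>2 + \<alpha>\<^sup>2)) * cos (\<delta> * t) \<partial>lborel) = (\<integral>t. (\<integral>s. F s t \<partial>lborel) \<partial>lborel)"
    using \<open>(\<lambda>t. \<integral>s. F s t \<partial>lborel) = _\<close> by simp
  also have "\<dots> = (\<integral>s. (\<integral>t. F s t \<partial>lborel) \<partial>lborel)" by (rule fub(2))
  also have "\<dots> = (\<integral>s. G2 s \<partial>lborel)"
    using Ft by (simp add: has_bochner_integral_iff)
  also have "\<dots> = 2 * \<alpha> * y * BesselK1 (\<alpha> * q) / q"
    using KG2 val by (simp add: has_bochner_integral_iff)
  finally show ?thesis using i1 unfolding q_def by (simp add: has_bochner_integral_iff)
qed

lemma nig_pdf_shift:
  "nig_pdf \<alpha> \<beta> \<mu> \<delta> (\<mu> + y) = \<alpha> * \<delta> / pi * (BesselK1 (\<alpha> * sqrt (\<delta>\<^sup>2 + y\<^sup>2)) / sqrt (\<delta>\<^sup>2 + y\<^sup>2)) * exp (\<delta> * sqrt (\<alpha>\<^sup>2 - \<beta>\<^sup>2) + \<beta> * y)"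
  unfolding nig_pdf_def Let_def by simp

lemma total_mass:
  fixes \<alpha> \<beta> \<mu> \<delta> :: real
  assumes \<alpha>: "\<alpha> > 0" and \<beta>: "\<bar>\<beta>\<bar> < \<alpha>" and \<delta>: "\<delta> > 0"
  shows "has_bochner_integral lborel (nig_pdf \<alpha> \<beta> \<mu> \<delta>) 1"
proof -
  define \<gamma> where "\<gamma> = sqrt (\<alpha>\<^sup>2 - \<beta>\<^sup>2)"
  have ab: "\<alpha>\<^sup>2 - \<beta>\<^sup>2 > 0"
  proof -
    have "\<beta>\<^sup>2 < \<alpha>\<^sup>2" using \<beta> \<alpha> by (metis abs_ge_zero abs_of_pos power2_abs power_strict_mono zero_less_numeral)
    thus ?thesis by simp
  qed
  have \<gamma>: "\<gamma> > 0" "\<gamma>\<^sup>2 = \<alpha>\<^sup>2 - \<beta>\<^sup>2" using ab by (auto simp: \<gamma>_def)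
  define K0 where "K0 = \<alpha> * \<delta> / pi * exp (\<delta> * \<gamma>) * (\<alpha> / 4)"
  have K0: "K0 > 0" using \<alpha> \<delta> by (simp add: K0_def)
  define F where "F s y = indicator {0<..} s * (K0 * (exp (\<beta> * y) * (exp (- 1 * s - (\<alpha>\<^sup>2 * (\<delta>\<^sup>2 + y\<^sup>2) / 4) / s) / s\<^sup>2)))" for s y :: real
  define a where "a = \<gamma>\<^sup>2 / \<alpha>\<^sup>2"
  define b where "b = \<alpha>\<^sup>2 * \<delta>\<^sup>2 / 4"
  have a: "a > 0" and b: "b > 0" using \<gamma> \<alpha> \<delta> unfolding a_def b_def by (simp_all add: \<gamma>(2)[symmetric])
  define G where "G s = indicator {0<..} s * ((K0 * (2 * sqrt pi / \<alpha>)) * (exp (- a * s - b / s) / (s * sqrt s)))" for s :: real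
  have mF: "(\<lambda>(s, y). F s y) \<in> borel_measurable (lborel \<Otimes>\<^sub>M lborel)"
    unfolding F_def by measurable
  have Fnn: "F s y \<ge> 0" for s y using K0 unfolding F_def by (auto simp: indicator_def)
  have Fy: "has_bochner_integral lborel (F s) (G s)" for s
  proof (cases "s > 0")
    case True
    define c where "c = \<alpha>\<^sup>2 / (4 * s)"
    have c: "c > 0" using True \<alpha> by (simp add: c_def)
    define m where "m = K0 * (exp (- 1 * s - b / s) / s\<^sup>2)"
    have eqF: "F s = (\<lambda>y. m * exp (\<beta> * y - c * y\<^sup>2))"
    proof
      fix y
      have "- 1 * s - (\<alpha>\<^sup>2 * (\<delta>\<^sup>2 + y\<^sup>2) / 4) / s = (- 1 * s - b / s) + (- c * y\<^sup>2)"
        unfolding b_def c_def using True by (simp add: field_simps)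
      hence "exp (\<beta> * y) * exp (- 1 * s - (\<alpha>\<^sup>2 * (\<delta>\<^sup>2 + y\<^sup>2) / 4) / s) = exp (- 1 * s - b / s) * exp (\<beta> * y - c * y\<^sup>2)"
        by (simp add: exp_add[symmetric])
      thus "F s y = m * exp (\<beta> * y - c * y\<^sup>2)"
        unfolding F_def m_def using True by (simp add: field_simps)
    qed
    have h: "has_bochner_integral lborel (\<lambda>y. m * exp (\<beta> * y - c * y\<^sup>2)) (m * (sqrt (pi / c) * exp (\<beta>\<^sup>2 / (4 * c))))"
      by (intro has_bochner_integral_mult_right gauss_shift c)
    have "m * (sqrt (pi / c) * exp (\<beta>\<^sup>2 / (4 * c))) = G s"
    proof -
      have s1: "sqrt (pi / c) = 2 * sqrt pi * sqrt s / \<alpha>"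
        unfolding c_def using True \<alpha> by (simp add: real_sqrt_divide real_sqrt_mult)
      have s2: "\<beta>\<^sup>2 / (4 * c) = \<beta>\<^sup>2 * s / \<alpha>\<^sup>2" unfolding c_def using True \<alpha> by (simp add: field_simps)
      have s3: "exp (- 1 * s - b / s) * exp (\<beta>\<^sup>2 * s / \<alpha>\<^sup>2) = exp (- a * s - b / s)"
      proof -
        have "- 1 * s - b / s + \<beta>\<^sup>2 * s / \<alpha>\<^sup>2 = - a * s - b / s"
          unfolding a_def \<gamma>(2) using \<alpha> by (simp add: field_simps)
        thus ?thesis by (simp add: exp_add[symmetric])
      qed
      have s4: "sqrt s * sqrt s = s" using True by simp
      have s5: "sqrt s / s\<^sup>2 = 1 / (s * sqrt s)"
      proof -
        have "s\<^sup>2 = (s * sqrt s) * sqrt s" using s4 by (simp add: power2_eq_square mult.assoc)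
        hence "sqrt s / s\<^sup>2 = sqrt s / ((s * sqrt s) * sqrt s)" by simp
        also have "\<dots> = 1 / (s * sqrt s)" using True by simp
        finally show ?thesis .
      qed
      have "m * (sqrt (pi / c) * exp (\<beta>\<^sup>2 / (4 * c))) = K0 * (2 * sqrt pi / \<alpha>) * ((exp (- 1 * s - b / s) * exp (\<beta>\<^sup>2 * s / \<alpha>\<^sup>2)) * (sqrt s / s\<^sup>2))"
        unfolding m_def s1 s2 by (simp add: field_simps)
      also have "\<dots> = K0 * (2 * sqrt pi / \<alpha>) * (exp (- a * s - b / s) / (s * sqrt s))"
        unfolding s3 s5 by simp
      finally show ?thesis unfolding G_def using True by simp
    qed
    thus ?thesis using h eqF by simp
  qed (simp add: F_def[abs_def] G_def has_bochner_integral_zero)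
  have hG: "has_bochner_integral lborel G ((K0 * (2 * sqrt pi / \<alpha>)) * (sqrt (pi / b) * exp (- 2 * sqrt (a * b))))"
    unfolding G_def using has_bochner_integral_mult_right[OF levy_integral[OF a b], of "K0 * (2 * sqrt pi / \<alpha>)"]
    by (simp add: algebra_simps)
  have one: "(K0 * (2 * sqrt pi / \<alpha>)) * (sqrt (pi / b) * exp (- 2 * sqrt (a * b))) = 1"
  proof -
    have e1: "sqrt (pi / b) = 2 * sqrt pi / (\<alpha> * \<delta>)"
      unfolding b_def using \<alpha> \<delta> by (simp add: real_sqrt_divide real_sqrt_mult)
    have "2 * sqrt (a * b) = \<gamma> * \<delta>"
    proof -
      have "a * b = (\<gamma> * \<delta> / 2)\<^sup>2" unfolding a_def b_def using \<alpha> by (simp add: field_simps power2_eq_square)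
      thus ?thesis using \<gamma> \<delta> by simp
    qed
    hence e2: "exp (- 2 * sqrt (a * b)) = exp (- (\<delta> * \<gamma>))" by (simp add: mult.commute)
    have e3: "exp (\<delta> * \<gamma>) * exp (- (\<delta> * \<gamma>)) = 1" by (simp add: exp_minus)
    have pp: "sqrt pi * sqrt pi = pi" by simp
    have pp': "sqrt pi * (sqrt pi * x) = pi * x" for x by (simp add: mult.assoc[symmetric])
    have "(K0 * (2 * sqrt pi / \<alpha>)) * (sqrt (pi / b) * exp (- 2 * sqrt (a * b)))
        = (\<alpha> * \<delta> / pi * (\<alpha> / 4) * (2 / \<alpha>) * (2 / (\<alpha> * \<delta>))) * (sqrt pi * sqrt pi) * (exp (\<delta> * \<gamma>) * exp (- (\<delta> * \<gamma>)))"
      unfolding e1 e2 K0_def using \<alpha> \<delta> by (simp add: field_simps pp')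
    also have "\<dots> = 1" unfolding e3 pp using \<alpha> \<delta> by (simp add: field_simps)
    finally show ?thesis .
  qed
  have iG: "integrable lborel G" using hG by (simp add: has_bochner_integral_iff)
  note fub = fubini_dom[OF mF mF _ Fy iG]
  have fub1: "integrable (lborel \<Otimes>\<^sub>M lborel) (\<lambda>(s, y). F s y)" using fub(1) Fnn by simp
  have fub2: "(\<integral>y. (\<integral>s. F s y \<partial>lborel) \<partial>lborel) = (\<integral>s. (\<integral>y. F s y \<partial>lborel) \<partial>lborel)" using fub(2) Fnn by simp
  have Fs: "(\<integral>s. F s y \<partial>lborel) = nig_pdf \<alpha> \<beta> \<mu> \<delta> (\<mu> + y)" for y
  proof -
    define q where "q = sqrt (\<delta>\<^sup>2 + y\<^sup>2)"
    have q: "q > 0" unfolding q_def using \<delta> by (simp add: add_pos_nonneg)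
    define B where "B = \<alpha>\<^sup>2 * (\<delta>\<^sup>2 + y\<^sup>2) / 4"
    have B: "B > 0" unfolding B_def using \<alpha> \<delta> by (simp add: add_pos_nonneg)
    have "has_bochner_integral lborel (\<lambda>s. (K0 * exp (\<beta> * y)) * (indicator {0<..} s * (exp (- 1 * s - B / s) / s\<^sup>2)))
       ((K0 * exp (\<beta> * y)) * (2 * sqrt (1 / B) * BesselK1 (2 * sqrt (1 * B))))"
      by (intro has_bochner_integral_mult_right kernel_K1 B) simp
    moreover have "(\<lambda>s. (K0 * exp (\<beta> * y)) * (indicator {0<..} s * (exp (- 1 * s - B / s) / s\<^sup>2))) = (\<lambda>s. F s y)"
      unfolding F_def B_def by (simp add: fun_eq_iff)
    ultimately have "(\<integral>s. F s y \<partial>lborel) = (K0 * exp (\<beta> * y)) * (2 * sqrt (1 / B) * BesselK1 (2 * sqrt (1 * B)))"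
      by (simp add: has_bochner_integral_iff)
    also have "\<dots> = nig_pdf \<alpha> \<beta> \<mu> \<delta> (\<mu> + y)"
    proof -
      have "2 * sqrt (1 * B) = \<alpha> * q" unfolding B_def q_def using \<alpha> by (simp add: real_sqrt_mult real_sqrt_divide)
      moreover have "2 * sqrt (1 / B) = 4 / (\<alpha> * q)" unfolding B_def q_def using \<alpha> by (simp add: real_sqrt_mult real_sqrt_divide)
      ultimately show ?thesis unfolding nig_pdf_shift K0_def q_def[symmetric] \<gamma>_def[symmetric] using \<alpha> q
        by (simp add: field_simps exp_add)
    qed
    finally show ?thesis .
  qed
  have "integrable lborel (\<lambda>y. \<integral>s. F s y \<partial>lborel)"
    by (rule lborel_pair.integrable_snd[OF fub1])
  hence i: "integrable lborel (\<lambda>y. nig_pdf \<alpha> \<beta> \<mu> \<delta> (\<mu> + y))" unfolding Fs .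
  have "(\<integral>y. nig_pdf \<alpha> \<beta> \<mu> \<delta> (\<mu> + y) \<partial>lborel) = (\<integral>s. (\<integral>y. F s y \<partial>lborel) \<partial>lborel)"
    using fub2 unfolding Fs .
  also have "\<dots> = (\<integral>s. G s \<partial>lborel)" using Fy by (simp add: has_bochner_integral_iff)
  also have "\<dots> = 1" using hG unfolding one by (simp add: has_bochner_integral_iff)
  finally have "has_bochner_integral lborel (\<lambda>y. nig_pdf \<alpha> \<beta> \<mu> \<delta> (\<mu> + y)) 1"
    using i by (simp add: has_bochner_integral_iff)
  from hbi_affine[OF this, of 1 "- \<mu>"] show ?thesis by simp
qed

lemma exp_integrable:
  fixes c :: real assumes c: "c > 0"
  shows "integrable lborel (\<lambda>y. indicator {0..} y * exp (- c * y))"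
proof -
  interpret prob_space "density lborel (exponential_density c)"
    by (rule prob_space_exponential_density[OF c])
  have "emeasure (density lborel (exponential_density c)) UNIV = 1"
    using emeasure_space_1 by simp
  hence "(\<integral>\<^sup>+ x. ennreal (exponential_density c x) * indicator UNIV x \<partial>lborel) = 1"
    by (subst (asm) emeasure_density) auto
  hence nn: "(\<integral>\<^sup>+ x. ennreal (exponential_density c x) \<partial>lborel) < \<infinity>" by simp
  have ie: "integrable lborel (exponential_density c)"
    by (rule integrableI_nonneg) (use nn exponential_density_nonneg[OF c] in auto)
  have "integrable lborel (\<lambda>y. (1 / c) * exponential_density c y)" using ie by simp
  moreover have "(\<lambda>y. (1 / c) * exponential_density c y) = (\<lambda>y. indicator {0..} y * exp (- c * y))"
    using c by (auto simp: fun_eq_iff exponential_density_def indicator_def mult.commute)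
  ultimately show ?thesis by simp
qed

lemma E1_rep:
  fixes y0 h :: real assumes y0: "y0 > 0" and h: "h > 0"
  shows "has_bochner_integral lborel (\<lambda>u. indicator {y0<..} u * (exp (- u * h) / u)) (expint_E1 (y0 * h))"
proof -
  define z where "z = y0 * h"
  have z: "z > 0" using y0 h by (simp add: z_def)
  define \<phi> where "\<phi> s = indicator {z..} s * (exp (- s) / s)" for s :: real
  have m\<phi>: "\<phi> \<in> borel_measurable lborel"
    unfolding \<phi>_def measurable_lborel2 by (intro meas_ind continuous_intros) (use z in auto)
  have i\<phi>: "integrable lborel \<phi>"
  proof (rule Bochner_Integration.integrable_bound)
    show "integrable lborel (\<lambda>s. (1 / z) * (indicator {0..} s * exp (- 1 * s)))"
      using exp_integrable[of 1] by simp
    show "AE s in lborel. norm (\<phi> s) \<le> norm ((1 / z) * (indicator {0..} s * exp (- 1 * s)))"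
    proof (rule AE_I2)
      fix s :: real
      show "norm (\<phi> s) \<le> norm ((1 / z) * (indicator {0..} s * exp (- 1 * s)))"
      proof (cases "s \<ge> z")
        case True
        have "exp (- s) / s \<le> exp (- s) / z" using True z by (intro divide_left_mono) auto
        thus ?thesis using True z unfolding \<phi>_def by (simp add: indicator_def)
      qed (simp add: \<phi>_def indicator_def)
    qed
  qed (rule m\<phi>)
  have v: "expint_E1 z = integral\<^sup>L lborel \<phi>"
    unfolding expint_E1_def \<phi>_def set_lebesgue_integral_def by simp
  have aff: "integral\<^sup>L lborel \<phi> = h * (\<integral>u. \<phi> (0 + h * u) \<partial>lborel)"
    using lborel_integral_real_affine[of h \<phi> 0] h by simp
  have iaff: "integrable lborel (\<lambda>u. \<phi> (0 + h * u))"
    by (rule lborel_integrable_real_affine[OF i\<phi>]) (use h in simp)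
  have eq: "h * \<phi> (0 + h * u) = indicator {y0..} u * (exp (- u * h) / u)" for u
  proof (cases "u \<ge> y0")
    case True
    hence "h * u \<ge> z" unfolding z_def using h by (simp add: mult.commute)
    thus ?thesis unfolding \<phi>_def using True h y0 by (simp add: indicator_def mult.commute)
  next
    case False
    hence "\<not> h * u \<ge> z" unfolding z_def using h by (simp add: mult.commute)
    thus ?thesis unfolding \<phi>_def using False by (simp add: indicator_def)
  qed
  have i2: "integrable lborel (\<lambda>u. indicator {y0..} u * (exp (- u * h) / u))"
    using integrable_mult_right[OF iaff, of h] unfolding eq .
  have v2: "(\<integral>u. indicator {y0..} u * (exp (- u * h) / u) \<partial>lborel) = expint_E1 z"
    unfolding v aff eq[symmetric] by simp
  have ae: "AE u in lborel. indicator {y0..} u * (exp (- u * h) / u) = indicator {y0<..} u * (exp (- u * h) / u)"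
    using AE_lborel_singleton[of y0] by eventually_elim (auto simp: indicator_def)
  have m3: "(\<lambda>u. indicator {y0<..} u * (exp (- u * h) / u)) \<in> borel_measurable lborel"
    unfolding measurable_lborel2 by (intro meas_ind continuous_intros) (use y0 in auto)
  have m2: "(\<lambda>u. indicator {y0..} u * (exp (- u * h) / u)) \<in> borel_measurable lborel"
    using i2 by (rule borel_measurable_integrable)
  have i3: "integrable lborel (\<lambda>u. indicator {y0<..} u * (exp (- u * h) / u))"
    by (rule integrable_cong_AE_imp[OF i2 m3 ae])
  have "(\<integral>u. indicator {y0<..} u * (exp (- u * h) / u) \<partial>lborel) = expint_E1 z"
    using integral_cong_AE[OF m2 m3 ae] v2 by simp
  with i3 show ?thesis unfolding z_def by (simp add: has_bochner_integral_iff)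
qed

theorem proposition3:
  fixes \<alpha> \<beta> \<mu> \<delta> x :: real
  assumes "\<alpha> > 0" and "\<bar>\<beta>\<bar> < \<alpha>" and "\<delta> > 0" and "x - \<mu> > 0"
  shows "nig_cdf \<alpha> \<beta> \<mu> \<delta> x =
    1 - \<delta> * exp (\<delta> * sqrt (\<alpha>\<^sup>2 - \<beta>\<^sup>2)) / pi *
      (LBINT t:{0..}. expint_E1 ((x - \<mu>) * (sqrt (t\<^sup>2 + \<alpha>\<^sup>2) - \<beta>)) * cos (\<delta> * t))"
proof -
  note \<alpha> = assms(1) and \<beta> = assms(2) and \<delta> = assms(3)
  define y0 where "y0 = x - \<mu>"
  have y0: "y0 > 0" using assms(4) by (simp add: y0_def)
  define f where "f = nig_pdf \<alpha> \<beta> \<mu> \<delta>"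
  define \<gamma> where "\<gamma> = sqrt (\<alpha>\<^sup>2 - \<beta>\<^sup>2)"
  define C where "C = \<delta> * exp (\<delta> * \<gamma>) / pi"
  define h where "h t = sqrt (t\<^sup>2 + \<alpha>\<^sup>2) - \<beta>" for t :: real
  define \<kappa> where "\<kappa> = (\<alpha> - \<bar>\<beta>\<bar>) / \<alpha>"
  have \<kappa>: "\<kappa> > 0" using \<alpha> \<beta> by (simp add: \<kappa>_def)
  have sq_ge: "sqrt (t\<^sup>2 + \<alpha>\<^sup>2) \<ge> \<alpha>" for t
    using \<alpha> by (metis abs_of_pos le_add_same_cancel2 real_sqrt_abs real_sqrt_le_mono zero_le_power2)
  have h_ge: "h t \<ge> \<kappa> * sqrt (t\<^sup>2 + \<alpha>\<^sup>2)" for t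
  proof -
    have "\<bar>\<beta>\<bar> = (\<bar>\<beta>\<bar> / \<alpha>) * \<alpha>" using \<alpha> by simp
    also have "\<dots> \<le> (\<bar>\<beta>\<bar> / \<alpha>) * sqrt (t\<^sup>2 + \<alpha>\<^sup>2)" using sq_ge[of t] \<alpha> by (intro mult_left_mono) auto
    finally have "\<bar>\<beta>\<bar> \<le> (\<bar>\<beta>\<bar> / \<alpha>) * sqrt (t\<^sup>2 + \<alpha>\<^sup>2)" .
    moreover have "\<kappa> * sqrt (t\<^sup>2 + \<alpha>\<^sup>2) = sqrt (t\<^sup>2 + \<alpha>\<^sup>2) - (\<bar>\<beta>\<bar> / \<alpha>) * sqrt (t\<^sup>2 + \<alpha>\<^sup>2)"
      unfolding \<kappa>_def using \<alpha> by (simp add: field_simps)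
    ultimately show ?thesis unfolding h_def by linarith
  qed
  have h_pos: "h t > 0" for t
  proof -
    have "sqrt (t\<^sup>2 + \<alpha>\<^sup>2) > 0" using sq_ge[of t] \<alpha> by linarith
    hence "\<kappa> * sqrt (t\<^sup>2 + \<alpha>\<^sup>2) > 0" using \<kappa> by simp
    thus ?thesis using h_ge[of t] by linarith
  qed
  have TM: "has_bochner_integral lborel f 1" unfolding f_def by (rule total_mass[OF \<alpha> \<beta> \<delta>])
  have iF: "integrable lborel f" using TM by (simp add: has_bochner_integral_iff)
  have i1: "integrable lborel (\<lambda>t. indicator {..x} t * f t)"
    using integrable_mult_indicator[of "{..x}" lborel f] iF by simp
  have i2: "integrable lborel (\<lambda>t. indicator {x<..} t * f t)"
    using integrable_mult_indicator[of "{x<..}" lborel f] iF by simp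
  have "1 = integral\<^sup>L lborel f" using TM by (simp add: has_bochner_integral_iff)
  also have "\<dots> = integral\<^sup>L lborel (\<lambda>t. indicator {..x} t * f t + indicator {x<..} t * f t)"
    by (intro Bochner_Integration.integral_cong) (auto simp: indicator_def)
  also have "\<dots> = integral\<^sup>L lborel (\<lambda>t. indicator {..x} t * f t) + integral\<^sup>L lborel (\<lambda>t. indicator {x<..} t * f t)"
    using i1 i2 by simp
  finally have split: "nig_cdf \<alpha> \<beta> \<mu> \<delta> x = 1 - integral\<^sup>L lborel (\<lambda>t. indicator {x<..} t * f t)"
    unfolding nig_cdf_def set_lebesgue_integral_def f_def by simp
  have shift: "integral\<^sup>L lborel (\<lambda>t. indicator {x<..} t * f t) = integral\<^sup>L lborel (\<lambda>u. indicator {y0<..} u * f (\<mu> + u))"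
  proof -
    have "integral\<^sup>L lborel (\<lambda>t. indicator {x<..} t * f t) = (\<integral>u. indicator {x<..} (\<mu> + 1 * u) * f (\<mu> + 1 * u) \<partial>lborel)"
      using lborel_integral_real_affine[of 1 "\<lambda>t. indicator {x<..} t * f t" \<mu>] by simp
    also have "\<dots> = integral\<^sup>L lborel (\<lambda>u. indicator {y0<..} u * f (\<mu> + u))"
      by (intro Bochner_Integration.integral_cong) (auto simp: indicator_def y0_def)
    finally show ?thesis .
  qed
  define F where "F u t = indicator {y0<..} u * (exp (- u * h t) / u * cos (\<delta> * t))" for u t :: real
  define g1 where "g1 u = indicator {y0<..} u * (exp (- (u - y0) * (\<kappa> * \<alpha>)) / y0)" for u :: real
  define H where "H u t = g1 u * (exp (- (y0 * \<kappa>) * sqrt (t\<^sup>2 + \<alpha>\<^sup>2)) * cos (0 * t))" for u t :: real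
  define I2 where "I2 = 2 * \<alpha> * (y0 * \<kappa>) * BesselK1 (\<alpha> * sqrt (0\<^sup>2 + (y0 * \<kappa>)\<^sup>2)) / sqrt (0\<^sup>2 + (y0 * \<kappa>)\<^sup>2)"
  have mF: "(\<lambda>(u, t). F u t) \<in> borel_measurable (lborel \<Otimes>\<^sub>M lborel)"
    unfolding F_def h_def by measurable
  have mH: "(\<lambda>(u, t). H u t) \<in> borel_measurable (lborel \<Otimes>\<^sub>M lborel)"
    unfolding H_def g1_def by measurable
  have bnd: "\<bar>F u t\<bar> \<le> H u t" for u t
  proof (cases "u > y0")
    case True
    define s where "s = sqrt (t\<^sup>2 + \<alpha>\<^sup>2)"
    have s: "s \<ge> \<alpha>" using sq_ge[of t] by (simp add: s_def)
    have "u * h t \<ge> u * (\<kappa> * s)" using h_ge[of t] True y0 unfolding s_def by (intro mult_left_mono) auto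
    moreover have "u * (\<kappa> * s) = (u - y0) * (\<kappa> * s) + y0 * \<kappa> * s" by (simp add: algebra_simps)
    moreover have "(u - y0) * (\<kappa> * s) \<ge> (u - y0) * (\<kappa> * \<alpha>)" using True \<kappa> s by (intro mult_left_mono) auto
    ultimately have l: "- (u * h t) \<le> - ((u - y0) * (\<kappa> * \<alpha>)) - y0 * \<kappa> * s" by linarith
    have ar: "- ((u - y0) * (\<kappa> * \<alpha>)) - y0 * \<kappa> * s = - (u - y0) * (\<kappa> * \<alpha>) + (- (y0 * \<kappa>) * s)"
      by (simp add: algebra_simps)
    have "exp (- (u * h t)) \<le> exp (- ((u - y0) * (\<kappa> * \<alpha>)) - y0 * \<kappa> * s)" using l by simp
    hence e: "exp (- u * h t) \<le> exp (- (u - y0) * (\<kappa> * \<alpha>)) * exp (- (y0 * \<kappa>) * s)"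
      unfolding ar exp_add by simp
    have "\<bar>F u t\<bar> = exp (- u * h t) / u * \<bar>cos (\<delta> * t)\<bar>" unfolding F_def using True y0 by (simp add: abs_mult)
    also have "\<dots> \<le> exp (- u * h t) / u" using True y0 by (intro mult_left_le) auto
    also have "\<dots> \<le> exp (- u * h t) / y0" using True y0 by (intro divide_left_mono) auto
    also have "\<dots> \<le> exp (- (u - y0) * (\<kappa> * \<alpha>)) * exp (- (y0 * \<kappa>) * s) / y0"
      using e y0 by (intro divide_right_mono) auto
    also have "\<dots> = H u t" unfolding H_def g1_def s_def using True by simp
    finally show ?thesis .
  qed (simp add: F_def H_def g1_def)
  have Ht: "has_bochner_integral lborel (H u) (g1 u * I2)" for u
    unfolding H_def[abs_def] I2_def
    by (intro has_bochner_integral_mult_right cos_ident \<alpha>) (use y0 \<kappa> in simp)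
  have ig1: "integrable lborel g1"
  proof (rule Bochner_Integration.integrable_bound)
    show "integrable lborel (\<lambda>u. (exp (y0 * (\<kappa> * \<alpha>)) / y0) * (indicator {0..} u * exp (- (\<kappa> * \<alpha>) * u)))"
      using exp_integrable[of "\<kappa> * \<alpha>"] \<kappa> \<alpha> by simp
    show "g1 \<in> borel_measurable lborel" unfolding g1_def by measurable
    show "AE u in lborel. norm (g1 u) \<le> norm ((exp (y0 * (\<kappa> * \<alpha>)) / y0) * (indicator {0..} u * exp (- (\<kappa> * \<alpha>) * u)))"
    proof (rule AE_I2)
      fix u show "norm (g1 u) \<le> norm ((exp (y0 * (\<kappa> * \<alpha>)) / y0) * (indicator {0..} u * exp (- (\<kappa> * \<alpha>) * u)))"
      proof (cases "u > y0")
        case True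
        have "exp (- (u - y0) * (\<kappa> * \<alpha>)) = exp (y0 * (\<kappa> * \<alpha>)) * exp (- (\<kappa> * \<alpha>) * u)"
          by (simp add: exp_add[symmetric] algebra_simps)
        thus ?thesis unfolding g1_def using True y0 by (simp add: indicator_def)
      qed (simp add: g1_def)
    qed
  qed
  have iG: "integrable lborel (\<lambda>u. g1 u * I2)" using ig1 by simp
  note fub = fubini_dom[OF mF mH bnd Ht iG]
  have Ft: "indicator {y0<..} u * f (\<mu> + u) = C / 2 * (\<integral>t. F u t \<partial>lborel)" for u
  proof (cases "u > y0")
    case True
    hence u: "u > 0" using y0 by simp
    define q where "q = sqrt (\<delta>\<^sup>2 + u\<^sup>2)"
    have q: "q > 0" unfolding q_def using \<delta> by (simp add: add_pos_nonneg)
    have "F u = (\<lambda>t. (exp (\<beta> * u) / u) * (exp (- u * sqrt (t\<^sup>2 + \<alpha>\<^sup>2)) * cos (\<delta> * t)))"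
    proof
      fix t
      have "exp (- u * h t) = exp (\<beta> * u) * exp (- u * sqrt (t\<^sup>2 + \<alpha>\<^sup>2))"
        unfolding h_def by (simp add: exp_add[symmetric] algebra_simps)
      thus "F u t = (exp (\<beta> * u) / u) * (exp (- u * sqrt (t\<^sup>2 + \<alpha>\<^sup>2)) * cos (\<delta> * t))"
        unfolding F_def using True by simp
    qed
    hence I: "(\<integral>t. F u t \<partial>lborel) = (exp (\<beta> * u) / u) * (2 * \<alpha> * u * BesselK1 (\<alpha> * q) / q)"
      using cos_ident[OF \<alpha> u, of \<delta>] unfolding q_def by (simp add: has_bochner_integral_iff)
    have P: "f (\<mu> + u) = \<alpha> * \<delta> / pi * (BesselK1 (\<alpha> * q) / q) * exp (\<delta> * \<gamma> + \<beta> * u)"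
      unfolding f_def nig_pdf_shift q_def \<gamma>_def ..
    show ?thesis unfolding I P C_def using True u q
      by (simp add: exp_add field_simps)
  qed (simp add: F_def)
  have Fu: "(\<integral>u. F u t \<partial>lborel) = expint_E1 (y0 * h t) * cos (\<delta> * t)" for t
  proof -
    have eqF: "(\<lambda>u. F u t) = (\<lambda>u. cos (\<delta> * t) * (indicator {y0<..} u * (exp (- u * h t) / u)))"
      unfolding F_def by (simp add: fun_eq_iff)
    moreover have "has_bochner_integral lborel (\<lambda>u. cos (\<delta> * t) * (indicator {y0<..} u * (exp (- u * h t) / u))) (cos (\<delta> * t) * expint_E1 (y0 * h t))"
      by (rule has_bochner_integral_mult_right[OF E1_rep[OF y0 h_pos[of t]]])
    ultimately have "(\<integral>u. F u t \<partial>lborel) = cos (\<delta> * t) * expint_E1 (y0 * h t)"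
      using has_bochner_integral_integral_eq by metis
    thus ?thesis by (simp add: mult.commute)
  qed
  define \<phi> where "\<phi> t = expint_E1 (y0 * h t) * cos (\<delta> * t)" for t
  have i\<phi>: "integrable lborel \<phi>"
    using lborel_pair.integrable_snd[OF fub(1)] unfolding \<phi>_def Fu .
  have ev: "\<phi> (- t) = \<phi> t" for t unfolding \<phi>_def h_def by simp
  have half: "(LBINT t:{0..}. expint_E1 ((x - \<mu>) * (sqrt (t\<^sup>2 + \<alpha>\<^sup>2) - \<beta>)) * cos (\<delta> * t)) = integral\<^sup>L lborel \<phi> / 2"
    using even_half[OF i\<phi> ev] unfolding set_lebesgue_integral_def \<phi>_def h_def y0_def
    by (simp add: has_bochner_integral_iff)
  have "integral\<^sup>L lborel (\<lambda>u. indicator {y0<..} u * f (\<mu> + u)) = integral\<^sup>L lborel (\<lambda>u. C / 2 * (\<integral>t. F u t \<partial>lborel))"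
    unfolding Ft ..
  also have "\<dots> = C / 2 * (\<integral>u. (\<integral>t. F u t \<partial>lborel) \<partial>lborel)" by simp
  also have "(\<integral>u. (\<integral>t. F u t \<partial>lborel) \<partial>lborel) = (\<integral>t. (\<integral>u. F u t \<partial>lborel) \<partial>lborel)"
    using fub(2) by simp
  also have "\<dots> = integral\<^sup>L lborel \<phi>" unfolding Fu \<phi>_def ..
  finally have "integral\<^sup>L lborel (\<lambda>u. indicator {y0<..} u * f (\<mu> + u)) = C / 2 * integral\<^sup>L lborel \<phi>" .
  thus ?thesis unfolding split shift half C_def \<gamma>_def by simp
qed

end
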